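(* Suppose $\mu_W = \mathbf{0}_{m \times k}$ (exogenous treatment). Then: (1) The model is invariant: $m_\mathcal{Z}(g,(Y^*,W^* )) \sim \mathbb{P}_{m_\Theta(g,\theta)}$ for all $g \in G$ and all $\theta \in \Theta$. (2) The loss is invariant: $L(m_\Theta(g,\theta),m_\mathcal{A}(g,a)) = L(\theta,a)$ for all $g \in G$, $\theta \in \Theta$, $a \in \mathcal{A}$.
   Context: Linear regression $Y_i = \alpha + X_i'\beta + W_i'\gamma + U_i$ with $n$ iid observations, regressors of interest $X_i \in \mathbb{R}^m$, controls $W_i \in \mathbb{R}^k$, homoscedastic Normal noise with variance $\sigma^2$. Condition on $X = x$ throughout. Let $q_x \in \mathbb{R}^{n\times m}$ and $q_\perp \in \mathbb{R}^{n \times s}$, $s = n-m-1$, be such that $(\mathbf{1}/\sqrt{n}, q_x, q_\perp)$ is an orthonormal $n\times n$ matrix and the columns of $(\mathbf{1},x)$ lie in the span of $(\mathbf{1}/\sqrt n, q_x)$. Write $W^*_x = q_x'W$, $W^*_\perp = q_\perp'W$, $Y^*_x = q_x'Y$, $Y^*_\perp = q_\perp'Y$. Assume the joint distribution $W^*_x = \mu_W + V_W^{(x)}\Sigma_W^{1/2}$, $W^*_\perp = V_W^{(\perp)}\Sigma_W^{1/2}$, where $V_W = (V_W^{(x)}; V_W^{(\perp)})$ has iid $\mathcal{N}(0,1)$ entries, and $Y^*_x = \mu_x + W^*_x\gamma + \text{noise}$, $Y^*_\perp = W^*_\perp\gamma + \text{noise}$, with the noise vector independent of $V_W$ and iid Normal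 with mean zero and variance $\sigma^2$ (scaled standard Normals $V_Y$). Here $\Sigma_W \in \mathbb{R}^{k\times k}$ is symmetric positive definite with symmetric positive-definite square root $\Sigma_W^{1/2}$, $\mu_x = q_x'x\beta \in \mathbb{R}^m$, $\mu_W = q_x'x\beta_W \in \mathbb{R}^{m\times k}$ (with $\beta_W$ the coefficient of $x$ in the conditional mean of $W$ given $X$). Sample space $\mathcal{Z} = \mathbb{R}^{m+s}\times\mathbb{R}^{(m+s)\times k}$, parameter $\theta = (\mu_x,\gamma) \in \Theta = \mathbb{R}^m\times\mathbb{R}^k$ (with $\sigma^2,\Sigma_W,\mu_W$ treated as known constants), and $\mathbb{P}_\theta$ is the distribution of $(Y^*,W^* )$. Action space $\mathcal{A} = \mathbb{R}^m$, loss $L(\theta,a) = \|\mu_x - a\|^2$. Group $G = \mathbb{R}^m \times O(m)\times O(k)\times O(s)$ (addition on $\mathbb{R}^m$, matrix multiplication on orthogonal groups), elements $g = (g_\mu,g_x,g_W,g_\perp)$, acting by $m_\mathcal{Z}(g,(y_x,y_\perp,w_x,w_\perp)) = (g_x y_x + g_\mu,\ g_\perp y_\perp,\ g_x w_x\Sigma_W^{-1/2}g_W'\Sigma_W^{1/2},\ g_\perp w_\perp\Sigma_W^{-1/2}g_W'\Sigma_W^{1/2})$, $m_\Theta(g,(\mu_x,\gamma)) = (g_x\mu_x + g_\mu,\ \Sigma_W^{-1/2}g_W\Sigma_W^{1/2}\gamma)$, $m_\mathcal{A}(g,a) = g_x a + g_\mu$. *)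

theory Defs
  imports "HOL-Analysis.Analysis" "HOL-Probability.Probability"
begin

definition std_normal_M :: "real measure" where
  "std_normal_M = density lborel std_normal_density"

text \<open>Underlying iid standard normal variables: index type
  ('m x 'k) + ('s x 'k) + 'm + 's, i.e. V_W^(x), V_W^(perp), V_Y^(x), V_Y^(perp).\<close>
definition noise_M :: "(('m::finite \<times> 'k::finite) + ('s::finite \<times> 'k) + 'm + 's \<Rightarrow> real) measure" where
  "noise_M = PiM UNIV (\<lambda>_. std_normal_M)"

definition pos_def_matrix :: "(real^'k^'k) \<Rightarrow> bool" where
  "pos_def_matrix A \<longleftrightarrow> transpose A = A \<and> (\<forall>v. v \<noteq> 0 \<longrightarrow> v \<bullet> (A *v v) > 0)"

text \<open>The data-generating map: noise variables to (Y*_x, Y*_perp, W*_x, W*_perp).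
  Matrices are row-indexed: (real^'k^'m) is an m x k matrix.\<close>
definition model_map ::
  "real \<Rightarrow> (real^'k^'k) \<Rightarrow> (real^'k^'m) \<Rightarrow> (real^'m) \<times> (real^'k)
   \<Rightarrow> (('m::finite \<times> 'k::finite) + ('s::finite \<times> 'k) + 'm + 's \<Rightarrow> real)
   \<Rightarrow> (real^'m) \<times> (real^'s) \<times> (real^'k^'m) \<times> (real^'k^'s)" where
  "model_map \<sigma> SWh muW \<theta> \<omega> =
    (let mux = fst \<theta>; \<gamma> = snd \<theta>;
         Vx = (\<chi> i j. \<omega> (Inl (i, j))) :: (real^'k^'m);
         Vp = (\<chi> i j. \<omega> (Inr (Inl (i, j)))) :: (real^'k^'s);
         ex = (\<chi> i. \<omega> (Inr (Inr (Inl i)))) :: (real^'m);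
         ep = (\<chi> i. \<omega> (Inr (Inr (Inr i)))) :: (real^'s);
         Wx = muW + Vx ** SWh;
         Wp = Vp ** SWh
     in (mux + Wx *v \<gamma> + \<sigma> *\<^sub>R ex, Wp *v \<gamma> + \<sigma> *\<^sub>R ep, Wx, Wp))"

definition model_P ::
  "real \<Rightarrow> (real^'k^'k) \<Rightarrow> (real^'k^'m) \<Rightarrow> (real^'m) \<times> (real^'k)
   \<Rightarrow> ((real^'m::finite) \<times> (real^'s::finite) \<times> (real^'k::finite^'m) \<times> (real^'k^'s)) measure" where
  "model_P \<sigma> SWh muW \<theta> = distr noise_M borel (model_map \<sigma> SWh muW \<theta>)"

definition in_G :: "(real^'m) \<times> (real^'m^'m) \<times> (real^'k^'k) \<times> (real^'s^'s) \<Rightarrow> bool" where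
  "in_G g \<longleftrightarrow> (case g of (g\<mu>, gx, gW, gp) \<Rightarrow>
     orthogonal_matrix gx \<and> orthogonal_matrix gW \<and> orthogonal_matrix gp)"

definition m_Z ::
  "(real^'k^'k) \<Rightarrow> (real^'m) \<times> (real^'m^'m) \<times> (real^'k^'k) \<times> (real^'s^'s)
   \<Rightarrow> (real^'m) \<times> (real^'s) \<times> (real^'k^'m) \<times> (real^'k^'s)
   \<Rightarrow> (real^'m) \<times> (real^'s) \<times> (real^'k^'m) \<times> (real^'k^'s)" where
  "m_Z SWh g z = (case g of (g\<mu>, gx, gW, gp) \<Rightarrow> case z of (yx, yp, wx, wp) \<Rightarrow>
     (gx *v yx + g\<mu>, gp *v yp,
      gx ** wx ** matrix_inv SWh ** transpose gW ** SWh,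
      gp ** wp ** matrix_inv SWh ** transpose gW ** SWh))"

definition m_Theta ::
  "(real^'k^'k) \<Rightarrow> (real^'m) \<times> (real^'m^'m) \<times> (real^'k^'k) \<times> (real^'s^'s)
   \<Rightarrow> (real^'m) \<times> (real^'k) \<Rightarrow> (real^'m) \<times> (real^'k)" where
  "m_Theta SWh g \<theta> = (case g of (g\<mu>, gx, gW, gp) \<Rightarrow> case \<theta> of (mux, \<gamma>) \<Rightarrow>
     (gx *v mux + g\<mu>, (matrix_inv SWh ** gW ** SWh) *v \<gamma>))"

definition m_A :: "(real^'m) \<times> (real^'m^'m) \<times> (real^'k^'k) \<times> (real^'s^'s) \<Rightarrow> (real^'m) \<Rightarrow> (real^'m)" where
  "m_A g a = (case g of (g\<mu>, gx, gW, gp) \<Rightarrow> gx *v a + g\<mu>)"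

definition loss :: "(real^'m) \<times> (real^'k) \<Rightarrow> (real^'m) \<Rightarrow> real" where
  "loss \<theta> a = (norm (fst \<theta> - a))\<^sup>2"

end

theory Submission
  imports Defs
begin

definition vec_of :: "('n::finite \<Rightarrow> real) \<Rightarrow> real^'n" where "vec_of f = (\<chi> i. f i)"
definition fun_of :: "real^'n::finite \<Rightarrow> ('n \<Rightarrow> real)" where "fun_of x = (\<lambda>i. x $ i)"
definition gauss :: "('n::finite \<Rightarrow> real) measure" where "gauss = PiM UNIV (\<lambda>_. std_normal_M)"

lemma measurable_vec_lambda_gen:
  fixes f :: "'a \<Rightarrow> 'n::finite \<Rightarrow> 'b::euclidean_space"
  assumes "\<And>i. (\<lambda>x. f x i) \<in> borel_measurable M"
  shows "(\<lambda>x. \<chi> i. f x i) \<in> borel_measurable M"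
  unfolding borel_measurable_euclidean_space[where f="\<lambda>x. \<chi> i. f x i"]
  using assms by (auto simp: Basis_vec_def inner_axis)

lemma measurable_vec_nth[measurable]: "(\<lambda>x::'b::real_normed_vector^'n::finite. x $ i) \<in> borel_measurable borel"
  by (intro borel_measurable_continuous_onI continuous_intros)

lemma sets_std_normal_M[simp, measurable_cong]: "sets std_normal_M = sets borel"
  by (simp add: std_normal_M_def)

lemma prob_space_std_normal_M: "prob_space std_normal_M"
  unfolding std_normal_M_def using prob_space_normal_density[of 1 0]
  by (simp add: std_normal_density_def normal_density_def)

lemma measurable_vec_of:
  assumes "\<And>i. sets (M i) = sets borel"
  shows "(vec_of :: ('n::finite \<Rightarrow> real) \<Rightarrow> real^'n) \<in> borel_measurable (PiM UNIV M)"
  unfolding vec_of_def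
proof (rule measurable_vec_lambda_gen)
  fix i :: 'n
  show "(\<lambda>f. f i) \<in> borel_measurable (PiM UNIV M)"
    using measurable_component_singleton[of i UNIV M] by (simp add: measurable_cong_sets[OF refl assms])
qed

lemma measurable_fun_of:
  assumes "\<And>i. sets (M i) = sets borel"
  shows "(fun_of :: real^'n::finite \<Rightarrow> ('n \<Rightarrow> real)) \<in> measurable borel (PiM UNIV M)"
  unfolding fun_of_def
  by (rule measurable_PiM_single') (auto simp: measurable_cong_sets[OF refl assms] space_PiM sets_eq_imp_space_eq[OF assms])

lemma psf_lborel: "product_sigma_finite (\<lambda>_. lborel)"
  by (simp add: product_sigma_finite_def sigma_finite_lborel)

lemma lborel_vec: "distr (PiM UNIV (\<lambda>_::'n::finite. lborel)) borel (vec_of :: _ \<Rightarrow> real^'n) = lborel"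
proof (rule lborel_eqI[symmetric])
  interpret product_sigma_finite "\<lambda>_::'n. lborel" by (rule psf_lborel)
  fix l u :: "real^'n" assume le: "\<And>b. b \<in> Basis \<Longrightarrow> l \<bullet> b \<le> u \<bullet> b"
  then have le': "l $ i \<le> u $ i" for i using le[of "axis i 1"] by (auto simp: Basis_vec_def inner_axis)
  have "vec_of -` box l u \<inter> space (PiM UNIV (\<lambda>_::'n. lborel)) = PiE UNIV (\<lambda>i. {l$i<..<u$i})"
    by (auto simp: vec_of_def mem_box_cart space_PiM PiE_def extensional_def Pi_iff)
  then have "emeasure (distr (PiM UNIV (\<lambda>_::'n. lborel)) borel vec_of) (box l u) = (\<Prod>i\<in>UNIV. emeasure lborel {l$i<..<u$i})"
    by (simp add: emeasure_distr measurable_vec_of emeasure_PiM)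
  also have "\<dots> = (\<Prod>i\<in>UNIV. ennreal (u$i - l$i))" using le' by simp
  also have "\<dots> = ennreal (\<Prod>i\<in>UNIV. (u$i - l$i))" using le' by (simp add: prod_ennreal)
  also have "(\<Prod>i\<in>UNIV. (u$i - l$i)) = (\<Prod>b\<in>Basis. (u - l) \<bullet> b)"
  proof -
    have B: "(Basis :: (real^'n) set) = (\<lambda>i. axis i (1::real)) ` (UNIV::'n set)" by (auto simp: Basis_vec_def)
    have inj: "inj (\<lambda>i. axis i (1::real) :: real^'n)" by (auto simp: inj_def axis_eq_axis)
    have "(\<Prod>b\<in>Basis. (u - l) \<bullet> b) = (\<Prod>i\<in>UNIV. (u - l) \<bullet> axis i (1::real))"
      unfolding B by (rule prod.reindex[OF inj, unfolded comp_def])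
    then show ?thesis by (simp add: inner_axis)
  qed
  finally show "emeasure (distr (PiM UNIV (\<lambda>_::'n. lborel)) borel vec_of) (box l u) = (\<Prod>b\<in>Basis. (u - l) \<bullet> b)" .
qed simp

lemma sf_std_normal_M: "sigma_finite_measure std_normal_M"
  using prob_space_std_normal_M by (simp add: prob_space_imp_sigma_finite)

lemma gauss_density:
  "(gauss :: ('n::finite \<Rightarrow> real) measure) = density (PiM UNIV (\<lambda>_. lborel)) (\<lambda>f. \<Prod>i\<in>UNIV. ennreal (std_normal_density (f i)))"
proof -
  interpret L: product_sigma_finite "\<lambda>_::'n. lborel" by (rule psf_lborel)
  interpret S: product_sigma_finite "\<lambda>_::'n. std_normal_M"
    by (simp add: product_sigma_finite_def sf_std_normal_M)
  have "density (PiM UNIV (\<lambda>_::'n. lborel)) (\<lambda>f. \<Prod>i\<in>UNIV. ennreal (std_normal_density (f i))) = PiM UNIV (\<lambda>_. std_normal_M)"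
  proof (rule S.PiM_eqI)
    show "sets (density (PiM UNIV (\<lambda>_::'n. lborel)) (\<lambda>f. \<Prod>i\<in>UNIV. ennreal (std_normal_density (f i)))) = sets (PiM UNIV (\<lambda>_. std_normal_M))"
      by (auto intro!: sets_PiM_cong)
    fix A :: "'n \<Rightarrow> real set" assume A: "\<And>i. i \<in> UNIV \<Longrightarrow> A i \<in> sets std_normal_M"
    then have A': "A i \<in> sets borel" for i by simp
    have "emeasure (density (PiM UNIV (\<lambda>_::'n. lborel)) (\<lambda>f. \<Prod>i\<in>UNIV. ennreal (std_normal_density (f i)))) (PiE UNIV A)
       = (\<integral>\<^sup>+ f. (\<Prod>i\<in>UNIV. ennreal (std_normal_density (f i)) * indicator (A i) (f i)) \<partial>PiM UNIV (\<lambda>_. lborel))"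
    proof -
      have Ameas: "PiE UNIV A \<in> sets (PiM UNIV (\<lambda>_::'n. lborel))"
        using A' by (intro sets_PiM_I_finite) auto
      have ind: "indicator (PiE UNIV A) f = (\<Prod>i\<in>UNIV. indicator (A i) (f i) :: ennreal)" for f :: "'n \<Rightarrow> real"
        by (simp add: indicator_def PiE_def Pi_iff prod_ennreal[symmetric])
      show ?thesis
        by (subst emeasure_density[OF _ Ameas]) (auto simp: ind prod.distrib[symmetric])
    qed
    also have "\<dots> = (\<Prod>i\<in>UNIV. \<integral>\<^sup>+ x. ennreal (std_normal_density x) * indicator (A i) x \<partial>lborel)"
      using A' by (intro L.product_nn_integral_prod) (auto intro!: borel_measurable_indicator)
    also have "\<dots> = (\<Prod>i\<in>UNIV. emeasure std_normal_M (A i))"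
      using A' by (simp add: std_normal_M_def emeasure_density mult.commute)
    finally show "emeasure (density (PiM UNIV (\<lambda>_::'n. lborel)) (\<lambda>f. \<Prod>i\<in>UNIV. ennreal (std_normal_density (f i)))) (PiE UNIV A) = (\<Prod>i\<in>UNIV. emeasure std_normal_M (A i))" .
  qed simp
  then show ?thesis by (simp add: gauss_def)
qed

definition Phi :: "real^'n::finite \<Rightarrow> ennreal" where
  "Phi x = (\<Prod>i\<in>UNIV. ennreal (std_normal_density (x $ i)))"

lemma Phi_measurable[measurable]: "Phi \<in> borel_measurable borel"
  unfolding Phi_def by measurable

lemma gauss_vec: "distr (gauss :: ('n::finite \<Rightarrow> real) measure) borel vec_of = density lborel Phi"
proof -
  have "density lborel (Phi :: real^'n \<Rightarrow> ennreal) = density (distr (PiM UNIV (\<lambda>_::'n. lborel)) borel vec_of) Phi"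
    by (simp add: lborel_vec)
  also have "\<dots> = distr (density (PiM UNIV (\<lambda>_::'n. lborel)) (\<lambda>f. Phi (vec_of f))) borel vec_of"
    by (rule density_distr) (auto intro: measurable_vec_of)
  also have "(\<lambda>f. Phi (vec_of f)) = (\<lambda>f::'n \<Rightarrow> real. \<Prod>i\<in>UNIV. ennreal (std_normal_density (f i)))"
    by (simp add: Phi_def vec_of_def)
  finally show ?thesis by (simp add: gauss_density)
qed

lemma lborel_orth:
  fixes h :: "real^'n::{finite,wellorder} \<Rightarrow> real^'n::{finite,wellorder}"
  assumes h: "orthogonal_transformation h"
  shows "distr lborel borel h = lborel"
proof (rule lborel_eqI[symmetric])
  have lin: "linear h" using h by (rule orthogonal_transformation_linear)
  have hm: "h \<in> borel_measurable borel"
    by (intro borel_measurable_continuous_onI linear_continuous_on linear_conv_bounded_linear[THEN iffD1] lin)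
  fix l u :: "(real, 'n) vec" assume le: "\<And>b. b \<in> Basis \<Longrightarrow> l \<bullet> b \<le> u \<bullet> b"
  have bij: "bij h" using h by (rule orthogonal_transformation_bij)
  have hi: "orthogonal_transformation (inv h)" using h by (rule orthogonal_transformation_inv)
  have eq: "h -` box l u = inv h ` box l u" using bij by (rule bij_vimage_eq_inv_image)
  have lm: "inv h ` box l u \<in> lmeasurable" by (rule measurable_orthogonal_image[OF hi]) simp
  have "emeasure (distr lborel borel h) (box l u) = emeasure lborel (inv h ` box l u)"
    using hm by (simp add: emeasure_distr eq)
  also have "\<dots> = emeasure lebesgue (inv h ` box l u)"
  proof -
    have "inv h ` box l u \<in> sets borel" using eq[symmetric] hm by (metis borel_open measurable_sets_borel open_box)
    then show ?thesis by (simp add: emeasure_completion main_part_sets)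
  qed
  also have "\<dots> = ennreal (measure lebesgue (inv h ` box l u))"
    using lm by (simp add: emeasure_eq_measure2)
  also have "\<dots> = ennreal (measure lebesgue (box l u))"
    by (simp add: measure_orthogonal_image[OF hi])
  also have "\<dots> = emeasure lebesgue (box l u)"
    by (simp add: emeasure_eq_measure2)
  also have "\<dots> = emeasure lborel (box l u)"
    by (simp add: emeasure_completion main_part_sets)
  also have "\<dots> = (\<Prod>b\<in>Basis. (u - l) \<bullet> b)"
    using le by (simp add: emeasure_lborel_box_eq)
  finally show "emeasure (distr lborel borel h) (box l u) = (\<Prod>b\<in>Basis. (u - l) \<bullet> b)" .
qed simp

lemma Phi_norm: "Phi (x :: real^'n::finite) = ennreal ((1 / sqrt (2 * pi)) ^ CARD('n) * exp (- (norm x)\<^sup>2 / 2))"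
proof -
  have "(\<Prod>i\<in>UNIV. std_normal_density (x $ i)) = (\<Prod>i\<in>(UNIV::'n set). (1 / sqrt (2 * pi)) * exp (- (x $ i)\<^sup>2 / 2))"
    by (simp add: std_normal_density_def)
  also have "\<dots> = (\<Prod>i\<in>(UNIV::'n set). (1 / sqrt (2 * pi))) * (\<Prod>i\<in>(UNIV::'n set). exp (- (x $ i)\<^sup>2 / 2))"
    by (rule prod.distrib)
  also have "\<dots> = (1 / sqrt (2 * pi)) ^ CARD('n) * exp (\<Sum>i\<in>UNIV. - (x $ i)\<^sup>2 / 2)"
    by (simp only: prod_constant exp_sum[OF finite_class.finite_UNIV, symmetric])
  also have "(\<Sum>i\<in>UNIV. - (x $ i)\<^sup>2 / 2) = - (norm x)\<^sup>2 / 2"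
  proof -
    have n2: "(norm x)\<^sup>2 = (\<Sum>i\<in>UNIV. x $ i * x $ i)" by (simp add: power2_norm_eq_inner inner_vec_def)
    have "(\<Sum>i\<in>UNIV. - (x $ i)\<^sup>2 / 2) = - (\<Sum>i\<in>UNIV. x $ i * x $ i) / 2"
      by (simp only: sum_divide_distrib[symmetric] sum_negf power2_eq_square)
    then show ?thesis by (simp only: n2)
  qed
  finally have "(\<Prod>i\<in>UNIV. std_normal_density (x $ i)) = (1 / sqrt (2 * pi)) ^ CARD('n) * exp (- (norm x)\<^sup>2 / 2)" .
  moreover have "Phi x = ennreal (\<Prod>i\<in>UNIV. std_normal_density (x $ i))"
    unfolding Phi_def by (simp add: prod_ennreal)
  ultimately show ?thesis by simp
qed

lemma Phi_orth: "orthogonal_transformation (h :: real^'n::finite \<Rightarrow> real^'n) \<Longrightarrow> Phi (h x) = Phi x"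
  by (simp add: Phi_norm orthogonal_transformation_norm)

lemma density_orth:
  fixes h :: "real^'n::{finite,wellorder} \<Rightarrow> real^'n::{finite,wellorder}"
  assumes h: "orthogonal_transformation h"
  shows "distr (density lborel Phi) borel h = density lborel Phi"
proof -
  have lin: "linear h" using h by (rule orthogonal_transformation_linear)
  have hm[measurable]: "h \<in> borel_measurable borel"
    by (intro borel_measurable_continuous_onI linear_continuous_on linear_conv_bounded_linear[THEN iffD1] lin)
  have "density lborel Phi = density (distr lborel borel h) Phi" by (simp add: lborel_orth[OF h])
  also have "\<dots> = distr (density lborel (\<lambda>x. Phi (h x))) borel h"
    by (rule density_distr) auto
  also have "(\<lambda>x. Phi (h x)) = Phi" using Phi_orth[OF h] by auto
  finally show ?thesis by simp
qed

lemma gauss_orth_wo: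
  fixes h :: "real^'n::{finite,wellorder} \<Rightarrow> real^'n::{finite,wellorder}"
  assumes h: "orthogonal_transformation h"
  shows "distr (gauss :: ('n \<Rightarrow> real) measure) gauss (\<lambda>f. fun_of (h (vec_of f))) = gauss"
proof -
  have lin: "linear h" using h by (rule orthogonal_transformation_linear)
  have hm[measurable]: "h \<in> borel_measurable borel"
    by (intro borel_measurable_continuous_onI linear_continuous_on linear_conv_bounded_linear[THEN iffD1] lin)
  have vm: "vec_of \<in> borel_measurable (gauss :: ('n \<Rightarrow> real) measure)"
    unfolding gauss_def by (rule measurable_vec_of) simp
  have fm: "fun_of \<in> borel \<rightarrow>\<^sub>M (gauss :: ('n \<Rightarrow> real) measure)"
    unfolding gauss_def by (rule measurable_fun_of) simp
  have "distr (gauss :: ('n \<Rightarrow> real) measure) gauss (\<lambda>f. fun_of (h (vec_of f)))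
      = distr (distr (distr gauss borel vec_of) borel h) gauss fun_of"
    using vm fm by (simp add: distr_distr comp_def)
  also have "\<dots> = distr (distr gauss borel vec_of) gauss fun_of"
    by (simp add: gauss_vec density_orth[OF h])
  also have "\<dots> = distr gauss gauss (\<lambda>f. fun_of (vec_of f))"
    using vm fm by (simp add: distr_distr comp_def)
  also have "(\<lambda>f::'n \<Rightarrow> real. fun_of (vec_of f)) = (\<lambda>f. f)"
    by (simp add: fun_of_def vec_of_def)
  finally show ?thesis by simp
qed

lemma F_meas:
  fixes h :: "real^'n::finite \<Rightarrow> real^'n::finite"
  assumes lin: "linear h"
  shows "(\<lambda>f. fun_of (h (vec_of f))) \<in> (gauss :: ('n \<Rightarrow> real) measure) \<rightarrow>\<^sub>M gauss"
proof -
  have hm[measurable]: "h \<in> borel_measurable borel"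
    by (intro borel_measurable_continuous_onI linear_continuous_on linear_conv_bounded_linear[THEN iffD1] lin)
  have vm: "vec_of \<in> borel_measurable (gauss :: ('n \<Rightarrow> real) measure)"
    unfolding gauss_def by (rule measurable_vec_of) simp
  have fm: "fun_of \<in> borel \<rightarrow>\<^sub>M (gauss :: ('n \<Rightarrow> real) measure)"
    unfolding gauss_def by (rule measurable_fun_of) simp
  show ?thesis using measurable_comp[OF measurable_comp[OF vm hm] fm] by (simp add: comp_def)
qed

lemma norm_eq_vec_split:
  fixes u v :: "real^'j::finite"
  assumes "(\<Sum>b\<in>S. u$b * u$b) = (\<Sum>b\<in>S. v$b * v$b)" and "\<And>b. b \<notin> S \<Longrightarrow> u$b = v$b"
  shows "norm u = norm v"
proof -
  have "(norm u)\<^sup>2 = (\<Sum>b\<in>UNIV. u$b * u$b)" by (simp add: power2_norm_eq_inner inner_vec_def)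
  also have "\<dots> = (\<Sum>b\<in>S. u$b * u$b) + (\<Sum>b\<in>UNIV - S. u$b * u$b)"
    by (metis (no_types, lifting) add.commute finite_class.finite_UNIV subset_UNIV sum.subset_diff)
  also have "\<dots> = (\<Sum>b\<in>S. v$b * v$b) + (\<Sum>b\<in>UNIV - S. v$b * v$b)"
    using assms by simp
  also have "\<dots> = (\<Sum>b\<in>UNIV. v$b * v$b)"
    by (metis (no_types, lifting) add.commute finite_class.finite_UNIV subset_UNIV sum.subset_diff)
  also have "\<dots> = (norm v)\<^sup>2" by (simp add: power2_norm_eq_inner inner_vec_def)
  finally show ?thesis by (simp add: power2_eq_iff_nonneg)
qed

lemma gauss_orth:
  fixes h :: "real^'i::finite \<Rightarrow> real^'i::finite"
  assumes h: "orthogonal_transformation h"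
  shows "distr (gauss :: ('i \<Rightarrow> real) measure) gauss (\<lambda>f. fun_of (h (vec_of f))) = gauss"
proof -
  have lin: "linear h" using h by (rule orthogonal_transformation_linear)
  have "card (UNIV :: 'i set) \<le> card (UNIV :: 'i bit0 set)" by simp
  then obtain e :: "'i \<Rightarrow> 'i bit0" where "inj_on e UNIV"
    using card_le_inj[of "UNIV :: 'i set" "UNIV :: 'i bit0 set"] by auto
  then have inj: "inj e" by simp
  define h' :: "real^'i bit0 \<Rightarrow> real^'i bit0" where
    "h' w = (\<chi> b. if b \<in> range e then h (\<chi> i. w $ e i) $ (inv e b) else w $ b)" for w
  have lin': "linear h'"
  proof (rule linearI)
    fix x y :: "real^'i bit0" and c :: real
    have eq: "(\<chi> i. x $ e i + y $ e i) = (\<chi> i. x $ e i) + (\<chi> i. y $ e i)" by (simp add: vec_eq_iff)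
    show "h' (x + y) = h' x + h' y"
      by (simp add: h'_def vec_eq_iff eq linear_add[OF lin])
    have eq2: "(\<chi> i. c * x $ e i) = c *\<^sub>R (\<chi> i. x $ e i)" by (simp add: vec_eq_iff)
    show "h' (c *\<^sub>R x) = c *\<^sub>R h' x"
      by (simp add: h'_def vec_eq_iff eq2 linear_scale[OF lin])
  qed
  have norm': "norm (h' w) = norm w" for w
  proof (rule norm_eq_vec_split[where S="range e"])
    show "b \<notin> range e \<Longrightarrow> h' w $ b = w $ b" for b by (simp add: h'_def)
    let ?v = "(\<chi> i. w $ e i) :: real^'i"
    have "(\<Sum>b\<in>range e. h' w $ b * h' w $ b) = (\<Sum>i\<in>UNIV. h ?v $ i * h ?v $ i)"
      by (simp add: sum.reindex[OF inj] h'_def inv_f_f[OF inj])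
    also have "\<dots> = (norm (h ?v))\<^sup>2" by (simp add: power2_norm_eq_inner inner_vec_def)
    also have "\<dots> = (norm ?v)\<^sup>2" by (simp add: orthogonal_transformation_norm[OF h])
    also have "\<dots> = (\<Sum>i\<in>UNIV. w $ e i * w $ e i)" by (simp add: power2_norm_eq_inner inner_vec_def)
    also have "\<dots> = (\<Sum>b\<in>range e. w $ b * w $ b)" by (simp add: sum.reindex[OF inj])
    finally show "(\<Sum>b\<in>range e. h' w $ b * h' w $ b) = (\<Sum>b\<in>range e. w $ b * w $ b)" .
  qed
  have h': "orthogonal_transformation h'"
    using lin' norm' by (simp add: orthogonal_transformation)
  define r :: "('i bit0 \<Rightarrow> real) \<Rightarrow> ('i \<Rightarrow> real)" where "r f = (\<lambda>i. f (e i))" for f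
  have rdist: "distr (gauss :: ('i bit0 \<Rightarrow> real) measure) (gauss :: ('i \<Rightarrow> real) measure) r = gauss"
    using distr_PiM_reindex[of UNIV "\<lambda>_. std_normal_M" e UNIV] inj prob_space_std_normal_M
    by (simp add: gauss_def r_def[abs_def] restrict_def)
  have rm: "r \<in> (gauss :: ('i bit0 \<Rightarrow> real) measure) \<rightarrow>\<^sub>M (gauss :: ('i \<Rightarrow> real) measure)"
    unfolding gauss_def r_def
    by (rule measurable_PiM_single') (auto simp: space_PiM)
  let ?F = "\<lambda>f::'i \<Rightarrow> real. fun_of (h (vec_of f))"
  let ?F' = "\<lambda>f::'i bit0 \<Rightarrow> real. fun_of (h' (vec_of f))"
  have comm: "?F (r f) = r (?F' f)" for f
    by (simp add: r_def fun_of_def h'_def vec_of_def inv_f_f[OF inj])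
  have Fm: "?F \<in> gauss \<rightarrow>\<^sub>M gauss" by (rule F_meas[OF lin])
  have F'm: "?F' \<in> gauss \<rightarrow>\<^sub>M gauss" by (rule F_meas[OF lin'])
  have "distr (gauss :: ('i \<Rightarrow> real) measure) gauss ?F = distr (distr (gauss :: ('i bit0 \<Rightarrow> real) measure) gauss r) gauss ?F"
    by (simp add: rdist)
  also have "\<dots> = distr (gauss :: ('i bit0 \<Rightarrow> real) measure) gauss (\<lambda>f. r (?F' f))"
    using rm Fm by (simp add: distr_distr comp_def comm)
  also have "\<dots> = distr (distr (gauss :: ('i bit0 \<Rightarrow> real) measure) gauss ?F') gauss r"
    using rm F'm by (simp add: distr_distr comp_def)
  also have "\<dots> = gauss"
    by (simp add: gauss_orth_wo[OF h'] rdist)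
  finally show ?thesis .
qed

lemma nsq: "(norm (x::real^'n::finite))\<^sup>2 = (\<Sum>i\<in>UNIV. (x$i)\<^sup>2)"
  unfolding power2_norm_eq_inner inner_vec_def by (simp add: power2_eq_square)

lemma orth_mat_norm: "orthogonal_matrix (Q::real^'n::finite^'n) \<Longrightarrow> norm (Q *v x) = norm x"
  using orthogonal_transformation_matrix[of "(*v) Q"]
  by (simp add: orthogonal_transformation_norm)

lemma orth_vec_sumsq: "orthogonal_matrix (Q::real^'n::finite^'n) \<Longrightarrow> (\<Sum>i\<in>UNIV. ((Q *v x)$i)\<^sup>2) = (\<Sum>i\<in>UNIV. (x$i)\<^sup>2)"
  using orth_mat_norm[of Q x] by (simp add: nsq[symmetric])

definition frob :: "real^'k::finite^'m::finite \<Rightarrow> real" where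
  "frob A = (\<Sum>i\<in>UNIV. \<Sum>j\<in>UNIV. (A$i$j)\<^sup>2)"

lemma frob_right:
  assumes "orthogonal_matrix (R::real^'k::finite^'k)"
  shows "frob ((A::real^'k^'m::finite) ** transpose R) = frob A"
proof -
  have row: "(A ** transpose R) $ i = R *v (A $ i)" for i
    by (simp add: vec_eq_iff matrix_matrix_mult_def matrix_vector_mult_def transpose_def mult.commute)
  show ?thesis unfolding frob_def row using orth_vec_sumsq[OF assms] by simp
qed

lemma frob_left:
  assumes "orthogonal_matrix (Q::real^'m::finite^'m)"
  shows "frob (Q ** (A::real^'k::finite^'m)) = frob A"
proof -
  have col: "(\<chi> i. (Q ** A) $ i $ j) = Q *v (\<chi> i. A $ i $ j)" for j
    by (simp add: vec_eq_iff matrix_matrix_mult_def matrix_vector_mult_def)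
  have "frob (Q ** A) = (\<Sum>j\<in>UNIV. \<Sum>i\<in>UNIV. ((\<chi> i. (Q ** A) $ i $ j) $ i)\<^sup>2)"
    unfolding frob_def by (subst sum.swap) simp
  also have "\<dots> = (\<Sum>j\<in>UNIV. \<Sum>i\<in>UNIV. ((\<chi> i. A $ i $ j) $ i)\<^sup>2)"
    unfolding col using orth_vec_sumsq[OF assms] by simp
  also have "\<dots> = frob A"
    unfolding frob_def by (subst sum.swap) simp
  finally show ?thesis .
qed

lemma sum_I:
  "(\<Sum>a\<in>UNIV. f a) = (\<Sum>i\<in>UNIV. \<Sum>j\<in>UNIV. f (Inl (i,j)))
     + ((\<Sum>i\<in>UNIV. \<Sum>j\<in>UNIV. f (Inr (Inl (i,j))))
     + ((\<Sum>i\<in>UNIV. f (Inr (Inr (Inl i)))) + (\<Sum>i\<in>UNIV. f (Inr (Inr (Inr i))))))"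
  for f :: "('m::finite \<times> 'k::finite) + ('s::finite \<times> 'k) + 'm + 's \<Rightarrow> real"
  by (simp add: UNIV_Plus_UNIV[symmetric] sum.Plus UNIV_Times_UNIV[symmetric] sum.cartesian_product' comp_def del: UNIV_Plus_UNIV UNIV_Times_UNIV)

lemma matrix_add_rdistrib': "((A::real^'n::finite^'m::finite) + B) ** (C::real^'p::finite^'n) = A ** C + B ** C"
  by (simp add: vec_eq_iff matrix_matrix_mult_def sum.distrib[symmetric] distrib_right)

type_synonym ('m,'k,'s) idx = "('m \<times> 'k) + ('s \<times> 'k) + 'm + 's"

definition Vx_of :: "(('m::finite,'k::finite,'s::finite) idx \<Rightarrow> real) \<Rightarrow> real^'k^'m" where
  "Vx_of \<omega> = (\<chi> i j. \<omega> (Inl (i, j)))"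
definition Vp_of :: "(('m::finite,'k::finite,'s::finite) idx \<Rightarrow> real) \<Rightarrow> real^'k^'s" where
  "Vp_of \<omega> = (\<chi> i j. \<omega> (Inr (Inl (i, j))))"
definition ex_of :: "(('m::finite,'k::finite,'s::finite) idx \<Rightarrow> real) \<Rightarrow> real^'m" where
  "ex_of \<omega> = (\<chi> i. \<omega> (Inr (Inr (Inl i))))"
definition ep_of :: "(('m::finite,'k::finite,'s::finite) idx \<Rightarrow> real) \<Rightarrow> real^'s" where
  "ep_of \<omega> = (\<chi> i. \<omega> (Inr (Inr (Inr i))))"

definition Tn :: "real^'m^'m \<Rightarrow> real^'k^'k \<Rightarrow> real^'s^'s \<Rightarrow> (('m::finite,'k::finite,'s::finite) idx \<Rightarrow> real) \<Rightarrow> (('m,'k,'s) idx \<Rightarrow> real)" where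
  "Tn gx gW gp \<omega> = (\<lambda>a. case a of
      Inl (i, j) \<Rightarrow> (gx ** Vx_of \<omega> ** transpose gW) $ i $ j
    | Inr (Inl (i, j)) \<Rightarrow> (gp ** Vp_of \<omega> ** transpose gW) $ i $ j
    | Inr (Inr (Inl i)) \<Rightarrow> (gx *v ex_of \<omega>) $ i
    | Inr (Inr (Inr i)) \<Rightarrow> (gp *v ep_of \<omega>) $ i)"

lemma Vx_Tn: "Vx_of (Tn gx gW gp \<omega>) = gx ** Vx_of \<omega> ** transpose gW"
  by (simp add: vec_eq_iff Vx_of_def Tn_def)
lemma Vp_Tn: "Vp_of (Tn gx gW gp \<omega>) = gp ** Vp_of \<omega> ** transpose gW"
  by (simp add: vec_eq_iff Vp_of_def Tn_def)
lemma ex_Tn: "ex_of (Tn gx gW gp \<omega>) = gx *v ex_of \<omega>"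
  by (simp add: vec_eq_iff ex_of_def Tn_def)
lemma ep_Tn: "ep_of (Tn gx gW gp \<omega>) = gp *v ep_of \<omega>"
  by (simp add: vec_eq_iff ep_of_def Tn_def)

definition hT :: "real^'m^'m \<Rightarrow> real^'k^'k \<Rightarrow> real^'s^'s \<Rightarrow> real^(('m::finite,'k::finite,'s::finite) idx) \<Rightarrow> real^(('m,'k,'s) idx)" where
  "hT gx gW gp v = vec_of (Tn gx gW gp (fun_of v))"

lemma hT_orth:
  assumes "orthogonal_matrix gx" "orthogonal_matrix gW" "orthogonal_matrix gp"
  shows "orthogonal_transformation (hT gx gW gp)"
proof -
  have Vx_add: "Vx_of (fun_of (x + y)) = Vx_of (fun_of x) + Vx_of (fun_of y)" for x y
    by (simp add: vec_eq_iff Vx_of_def fun_of_def)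
  have Vp_add: "Vp_of (fun_of (x + y)) = Vp_of (fun_of x) + Vp_of (fun_of y)" for x y
    by (simp add: vec_eq_iff Vp_of_def fun_of_def)
  have ex_add: "ex_of (fun_of (x + y)) = ex_of (fun_of x) + ex_of (fun_of y)" for x y
    by (simp add: vec_eq_iff ex_of_def fun_of_def)
  have ep_add: "ep_of (fun_of (x + y)) = ep_of (fun_of x) + ep_of (fun_of y)" for x y
    by (simp add: vec_eq_iff ep_of_def fun_of_def)
  have Vx_sc: "Vx_of (fun_of (c *\<^sub>R x)) = c *\<^sub>R Vx_of (fun_of x)" for c x
    by (simp add: vec_eq_iff Vx_of_def fun_of_def)
  have Vp_sc: "Vp_of (fun_of (c *\<^sub>R x)) = c *\<^sub>R Vp_of (fun_of x)" for c x
    by (simp add: vec_eq_iff Vp_of_def fun_of_def)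
  have ex_sc: "ex_of (fun_of (c *\<^sub>R x)) = c *\<^sub>R ex_of (fun_of x)" for c x
    by (simp add: vec_eq_iff ex_of_def fun_of_def)
  have ep_sc: "ep_of (fun_of (c *\<^sub>R x)) = c *\<^sub>R ep_of (fun_of x)" for c x
    by (simp add: vec_eq_iff ep_of_def fun_of_def)
  have lin: "linear (hT gx gW gp)"
  proof (rule linearI)
    fix x y
    show "hT gx gW gp (x + y) = hT gx gW gp x + hT gx gW gp y"
      unfolding hT_def vec_eq_iff
      by (auto simp: vec_of_def Tn_def Vx_add Vp_add ex_add ep_add matrix_add_ldistrib matrix_add_rdistrib'
                     matrix_vector_right_distrib split: sum.split)
  next
    fix c x
    show "hT gx gW gp (c *\<^sub>R x) = c *\<^sub>R hT gx gW gp x"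
      unfolding hT_def vec_eq_iff
      by (auto simp: vec_of_def Tn_def Vx_sc Vp_sc ex_sc ep_sc matrix_scalar_ac scalar_matrix_assoc[symmetric]
                     matrix_vector_mult_scaleR split: sum.split)
  qed
  have nrm: "norm (hT gx gW gp v) = norm v" for v
  proof -
    let ?w = "fun_of v"
    have "(norm (hT gx gW gp v))\<^sup>2 = frob (gx ** Vx_of ?w ** transpose gW) + (frob (gp ** Vp_of ?w ** transpose gW)
        + ((\<Sum>i\<in>UNIV. ((gx *v ex_of ?w) $ i)\<^sup>2) + (\<Sum>i\<in>UNIV. ((gp *v ep_of ?w) $ i)\<^sup>2)))"
      unfolding nsq by (subst sum_I) (simp add: hT_def vec_of_def Tn_def frob_def)
    also have "\<dots> = frob (Vx_of ?w) + (frob (Vp_of ?w) + ((\<Sum>i\<in>UNIV. (ex_of ?w $ i)\<^sup>2) + (\<Sum>i\<in>UNIV. (ep_of ?w $ i)\<^sup>2)))"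
      using assms by (simp add: frob_left frob_right orth_vec_sumsq matrix_mul_assoc[symmetric])
    also have "\<dots> = (norm v)\<^sup>2"
      unfolding nsq by (subst sum_I) (simp add: frob_def Vx_of_def Vp_of_def ex_of_def ep_of_def fun_of_def)
    finally show ?thesis by (simp add: power2_eq_iff_nonneg)
  qed
  show ?thesis using lin nrm by (simp add: orthogonal_transformation)
qed

lemma noise_Tn:
  assumes "orthogonal_matrix gx" "orthogonal_matrix gW" "orthogonal_matrix gp"
  shows "distr (noise_M :: (('m::finite,'k::finite,'s::finite) idx \<Rightarrow> real) measure) noise_M (Tn gx gW gp) = noise_M"
proof -
  have "(\<lambda>f. fun_of (hT gx gW gp (vec_of f))) = (Tn gx gW gp :: (('m,'k,'s) idx \<Rightarrow> real) \<Rightarrow> _)"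
    by (simp add: fun_eq_iff hT_def fun_of_def vec_of_def)
  moreover have "(noise_M :: (('m,'k,'s) idx \<Rightarrow> real) measure) = gauss"
    by (simp add: noise_M_def gauss_def)
  ultimately show ?thesis using gauss_orth[OF hT_orth[OF assms]] by simp
qed

lemma lin_mr: "linear (\<lambda>A::real^'n::finite^'m::finite. A ** (C::real^'p::finite^'n))"
  by (rule linearI) (simp_all add: matrix_add_rdistrib' scalar_matrix_assoc)
lemma lin_ml: "linear (\<lambda>A::real^'p::finite^'n::finite. (B::real^'n^'m::finite) ** A)"
  by (rule linearI) (simp_all add: matrix_add_ldistrib matrix_scalar_ac scalar_matrix_assoc[symmetric])
lemma lin_mvr: "linear (\<lambda>A::real^'n::finite^'m::finite. A *v x)"
  by (rule linearI) (simp_all add: vec_eq_iff matrix_vector_mult_def sum_distrib_left mult.assoc sum.distrib[symmetric] distrib_right)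

lemma cont_mr[continuous_intros]: "continuous_on S f \<Longrightarrow> continuous_on S (\<lambda>x. (f x :: real^'n::finite^'m::finite) ** (C::real^'p::finite^'n))"
  using bounded_linear.continuous_on[of "(\<lambda>A. A ** C)" S f] lin_mr linear_conv_bounded_linear by blast
lemma cont_ml[continuous_intros]: "continuous_on S f \<Longrightarrow> continuous_on S (\<lambda>x. (B::real^'n::finite^'m::finite) ** (f x :: real^'p::finite^'n))"
  using bounded_linear.continuous_on[of "(\<lambda>A. B ** A)" S f] lin_ml linear_conv_bounded_linear by blast
lemma cont_mvr[continuous_intros]: "continuous_on S f \<Longrightarrow> continuous_on S (\<lambda>x. (f x :: real^'n::finite^'m::finite) *v c)"
  using bounded_linear.continuous_on[of "(\<lambda>A. A *v c)" S f] lin_mvr linear_conv_bounded_linear by blast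
lemma cont_mvl[continuous_intros]: "continuous_on S f \<Longrightarrow> continuous_on S (\<lambda>x. (B::real^'n::finite^'m::finite) *v f x)"
  using bounded_linear.continuous_on[of "(\<lambda>A. B *v A)" S f] matrix_vector_mul_linear linear_conv_bounded_linear by blast

lemma model_map_meas:
  "model_map \<sigma> SWh muW \<theta> \<in> (noise_M :: (('m::finite,'k::finite,'s::finite) idx \<Rightarrow> real) measure) \<rightarrow>\<^sub>M borel"
proof -
  let ?P = "\<lambda>v::real^(('m,'k,'s) idx). model_map \<sigma> SWh muW \<theta> (fun_of v)"
  have "continuous_on UNIV ?P"
    unfolding model_map_def Let_def fun_of_def
    by (intro continuous_intros continuous_on_vec_lambda)
  then have Pm: "?P \<in> borel_measurable borel" by (rule borel_measurable_continuous_onI)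
  have vm: "vec_of \<in> borel_measurable (noise_M :: (('m,'k,'s) idx \<Rightarrow> real) measure)"
    unfolding noise_M_def by (rule measurable_vec_of) simp
  have "model_map \<sigma> SWh muW \<theta> = (\<lambda>\<omega>. ?P (vec_of \<omega>))"
    by (simp add: fun_eq_iff fun_of_def vec_of_def)
  then show ?thesis using measurable_comp[OF vm Pm] by (simp add: comp_def)
qed

lemma m_Z_meas: "m_Z SWh g \<in> borel_measurable borel"
proof -
  obtain g\<mu> gx gW gp where g: "g = (g\<mu>, gx, gW, gp)" by (cases g) auto
  have "m_Z SWh g = (\<lambda>z. (gx *v fst z + g\<mu>, gp *v fst (snd z),
      gx ** fst (snd (snd z)) ** matrix_inv SWh ** transpose gW ** SWh,
      gp ** snd (snd (snd z)) ** matrix_inv SWh ** transpose gW ** SWh))"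
    by (auto simp: fun_eq_iff m_Z_def g split: prod.split)
  moreover have "continuous_on UNIV (\<lambda>z. (gx *v fst z + g\<mu>, gp *v fst (snd z),
      gx ** fst (snd (snd z)) ** matrix_inv SWh ** transpose gW ** SWh,
      gp ** snd (snd (snd z)) ** matrix_inv SWh ** transpose gW ** SWh))"
    by (intro continuous_intros)
  ultimately show ?thesis by (simp add: borel_measurable_continuous_onI)
qed

lemma model_comm:
  fixes SWh :: "real^'k::finite^'k" and gx :: "real^'m::finite^'m" and gp :: "real^'s::finite^'s"
  assumes hS: "\<And>X::real^'k^'k. X ** SWh ** matrix_inv SWh = X"
    and hS2: "\<And>X::real^'k^'m. X ** SWh ** matrix_inv SWh = X"
    and hS3: "\<And>X::real^'k^'s. X ** SWh ** matrix_inv SWh = X"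
    and hW2: "\<And>X::real^'k^'m. X ** transpose gW ** gW = X"
    and hW3: "\<And>X::real^'k^'s. X ** transpose gW ** gW = X"
  shows "m_Z SWh (g\<mu>, gx, gW, gp) (model_map \<sigma> SWh (0::real^'k^'m) \<theta> \<omega>)
       = model_map \<sigma> SWh 0 (m_Theta SWh (g\<mu>, gx, gW, gp) \<theta>) (Tn gx gW gp (\<omega> :: ('m,'k,'s) idx \<Rightarrow> real))"
proof -
  obtain mux \<gamma> where th: "\<theta> = (mux, \<gamma>)" by (cases \<theta>) auto
  have e1: "(\<chi> i j. \<omega>' (Inl (i, j))) = Vx_of \<omega>'" for \<omega>' :: "('m,'k,'s) idx \<Rightarrow> real" by (simp add: Vx_of_def)
  have e2: "(\<chi> i j. \<omega>' (Inr (Inl (i, j)))) = Vp_of \<omega>'" for \<omega>' :: "('m,'k,'s) idx \<Rightarrow> real" by (simp add: Vp_of_def)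
  have e3: "(\<chi> i. \<omega>' (Inr (Inr (Inl i)))) = ex_of \<omega>'" for \<omega>' :: "('m,'k,'s) idx \<Rightarrow> real" by (simp add: ex_of_def)
  have e4: "(\<chi> i. \<omega>' (Inr (Inr (Inr i)))) = ep_of \<omega>'" for \<omega>' :: "('m,'k,'s) idx \<Rightarrow> real" by (simp add: ep_of_def)
  show ?thesis
    unfolding model_map_def Let_def th m_Theta_def m_Z_def
    by (simp add: e1 e2 e3 e4 Vx_Tn Vp_Tn ex_Tn ep_Tn matrix_vector_mul_assoc matrix_mul_assoc hS hS2 hS3 hW2 hW3
        matrix_vector_right_distrib matrix_vector_mult_scaleR add_ac)
qed

theorem mainTheorem5:
  fixes \<sigma> :: real
    and SW SWh :: "(real^'k::finite^'k)"
    and muW :: "(real^'k^'m::finite)"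
  assumes "\<sigma> > 0"
    and "pos_def_matrix SW"
    and "pos_def_matrix SWh"
    and "SWh ** SWh = SW"
    and "muW = 0"
  shows "(\<forall>g \<theta>. in_G (g :: (real^'m) \<times> (real^'m^'m) \<times> (real^'k^'k) \<times> (real^'s::finite^'s)) \<longrightarrow>
            distr (model_P \<sigma> SWh muW \<theta>) borel (m_Z SWh g)
              = model_P \<sigma> SWh muW (m_Theta SWh g \<theta>))
       \<and> (\<forall>g \<theta> a. in_G (g :: (real^'m) \<times> (real^'m^'m) \<times> (real^'k^'k) \<times> (real^'s^'s)) \<longrightarrow>
            loss (m_Theta SWh g \<theta>) (m_A g a) = loss \<theta> a)"
proof (intro conjI allI impI)
  fix g :: "(real^'m) \<times> (real^'m^'m) \<times> (real^'k^'k) \<times> (real^'s^'s)" and \<theta> :: "(real^'m) \<times> (real^'k)"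
  assume G: "in_G g"
  obtain g\<mu> gx gW gp where g: "g = (g\<mu>, gx, gW, gp)" by (cases g) auto
  have ox: "orthogonal_matrix gx" and oW: "orthogonal_matrix gW" and op: "orthogonal_matrix gp"
    using G by (auto simp: in_G_def g)
  have ker: "\<forall>x. SWh *v x = 0 \<longrightarrow> x = 0"
    using assms(3) unfolding pos_def_matrix_def by (metis inner_zero_right less_irrefl)
  then obtain B where B: "B ** SWh = mat 1" using matrix_left_invertible_ker by blast
  then have "SWh ** B = mat 1" by (simp add: matrix_left_right_inverse)
  with B have ex: "\<exists>A'. SWh ** A' = mat 1 \<and> A' ** SWh = mat 1" by blast
  have Sinv: "SWh ** matrix_inv SWh = mat 1"
    unfolding matrix_inv_def using someI_ex[OF ex] by blast
  have hS: "X ** SWh ** matrix_inv SWh = X" for X :: "real^'k^'k"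
    by (simp add: matrix_mul_assoc[symmetric] Sinv)
  have hS2: "X ** SWh ** matrix_inv SWh = X" for X :: "real^'k^'m"
    by (simp add: matrix_mul_assoc[symmetric] Sinv)
  have hS3: "X ** SWh ** matrix_inv SWh = X" for X :: "real^'k^'s"
    by (simp add: matrix_mul_assoc[symmetric] Sinv)
  have WW: "transpose gW ** gW = mat 1" using oW by (simp add: orthogonal_matrix_def)
  have hW2: "X ** transpose gW ** gW = X" for X :: "real^'k^'m"
    by (simp add: matrix_mul_assoc[symmetric] WW)
  have hW3: "X ** transpose gW ** gW = X" for X :: "real^'k^'s"
    by (simp add: matrix_mul_assoc[symmetric] WW)
  have Tm: "Tn gx gW gp \<in> (noise_M :: (('m,'k,'s) idx \<Rightarrow> real) measure) \<rightarrow>\<^sub>M noise_M"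
  proof -
    have "(\<lambda>f. fun_of (hT gx gW gp (vec_of f))) = (Tn gx gW gp :: (('m,'k,'s) idx \<Rightarrow> real) \<Rightarrow> _)"
      by (simp add: fun_eq_iff hT_def fun_of_def vec_of_def)
    moreover have "(noise_M :: (('m,'k,'s) idx \<Rightarrow> real) measure) = gauss"
      by (simp add: noise_M_def gauss_def)
    ultimately show ?thesis
      using F_meas[OF orthogonal_transformation_linear[OF hT_orth[OF ox oW op]]] by simp
  qed
  have "distr (model_P \<sigma> SWh muW \<theta>) borel (m_Z SWh g)
      = distr (noise_M :: (('m,'k,'s) idx \<Rightarrow> real) measure) borel (\<lambda>\<omega>. m_Z SWh g (model_map \<sigma> SWh muW \<theta> \<omega>))"
    unfolding model_P_def by (simp add: distr_distr[OF m_Z_meas model_map_meas] comp_def)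
  also have "\<dots> = distr (noise_M :: (('m,'k,'s) idx \<Rightarrow> real) measure) borel
        (\<lambda>\<omega>. model_map \<sigma> SWh muW (m_Theta SWh g \<theta>) (Tn gx gW gp \<omega>))"
    using model_comm[OF hS hS2 hS3 hW2 hW3] by (simp add: g assms(5))
  also have "\<dots> = distr (distr (noise_M :: (('m,'k,'s) idx \<Rightarrow> real) measure) noise_M (Tn gx gW gp)) borel
        (model_map \<sigma> SWh muW (m_Theta SWh g \<theta>))"
    by (simp add: distr_distr[OF model_map_meas Tm] comp_def)
  also have "\<dots> = model_P \<sigma> SWh muW (m_Theta SWh g \<theta>)"
    by (simp add: noise_Tn[OF ox oW op] model_P_def)
  finally show "distr (model_P \<sigma> SWh muW \<theta>) borel (m_Z SWh g) = model_P \<sigma> SWh muW (m_Theta SWh g \<theta>)" .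
next
  fix g :: "(real^'m) \<times> (real^'m^'m) \<times> (real^'k^'k) \<times> (real^'s^'s)" and \<theta> :: "(real^'m) \<times> (real^'k)" and a
  assume G: "in_G g"
  obtain g\<mu> gx gW gp where g: "g = (g\<mu>, gx, gW, gp)" by (cases g) auto
  have ox: "orthogonal_matrix gx" using G by (auto simp: in_G_def g)
  obtain mux \<gamma> where th: "\<theta> = (mux, \<gamma>)" by (cases \<theta>) auto
  have "gx *v mux + g\<mu> - (gx *v a + g\<mu>) = gx *v (mux - a)"
    by (simp add: matrix_vector_mult_diff_distrib)
  then show "loss (m_Theta SWh g \<theta>) (m_A g a) = loss \<theta> a"
    by (simp add: loss_def m_Theta_def m_A_def g th orth_mat_norm[OF ox])
qed

end
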